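(* Let $N=\prod_{i=1}^\ell p_i^{r_i}$ be a positive integer, where $p_1,\dots,p_\ell$ are distinct primes and $r_1,\dots,r_\ell\ge 1$. Let $\mu\ge 1$ and let $f\in\mathbb{Z}[X_1,\dots,X_\mu]$ be any $\mu$-linear polynomial that is co-prime to $N$. Then for every integer $m>1$, if $\mathbf{x}=(x_1,\dots,x_\mu)$ is sampled uniformly from $\{0,1,\dots,m-1\}^\mu$, $$\Pr_{\mathbf{x}}\big[f(\mathbf{x})\equiv 0 \pmod N\big]\;\le\;\frac{\mu}{m}+\prod_{i=1}^{\ell} I_{1/p_i}(r_i,\mu).$$
   Context: A polynomial $f\in\mathbb{Z}[X_1,\dots,X_\mu]$ is $\mu$-linear (multilinear) if it has degree at most $1$ in each variable $X_i$. $f$ is co-prime to $N$ if the greatest common divisor of $N$ and all coefficients of $f$ equals $1$. For $\epsilon\in(0,1)$ and integers $k\ge 0$, $\mu\ge 1$, the regularized (incomplete) beta function is $I_\epsilon(k,\mu)=(1-\epsilon)^\mu\sum_{j=k}^{\infty}\binom{\mu+j-1}{j}\epsilon^j$; equivalently, it is the probability that $Z_1+\dots+Z_\mu\ge k$, where $Z_1,\dots,Z_\mu$ are i.i.d. nonnegative-integer random variables with $\Pr[Z_i\ge s]=\epsilon^s$ for all $s\ge 0$. *)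

theory Defs
  imports "HOL-Analysis.Analysis" "HOL-Computational_Algebra.Primes"
begin

text \<open>A mu-linear polynomial in Z[X_0,...,X_(mu-1)] is given by its coefficient
  function c on subsets S of {..<mu}: f(x) = sum over S of c S * prod_{i in S} x i.\<close>
definition mlin_eval :: "nat \<Rightarrow> (nat set \<Rightarrow> int) \<Rightarrow> (nat \<Rightarrow> int) \<Rightarrow> int" where
  "mlin_eval \<mu> c x = (\<Sum>S\<in>Pow {..<\<mu>}. c S * (\<Prod>i\<in>S. x i))"

definition mlin_coprime :: "nat \<Rightarrow> (nat set \<Rightarrow> int) \<Rightarrow> int \<Rightarrow> bool" where
  "mlin_coprime \<mu> c N \<longleftrightarrow> Gcd (insert N (c ` Pow {..<\<mu>})) = 1"

definition inc_beta :: "real \<Rightarrow> nat \<Rightarrow> nat \<Rightarrow> real" where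
  "inc_beta \<epsilon> k \<mu> = (1 - \<epsilon>) ^ \<mu> *
     (\<Sum>j. if k \<le> j then real ((\<mu> + j - 1) choose j) * \<epsilon> ^ j else 0)"

end

theory Submission
  imports Defs
begin


definition alpha :: "real \<Rightarrow> nat \<Rightarrow> nat \<Rightarrow> real" where
  "alpha e r s = (if s < r then (1 - e) * e ^ s else e ^ r)"

fun GG :: "real \<Rightarrow> nat \<Rightarrow> nat \<Rightarrow> real" where
  "GG e 0 k = (if k = 0 then 1 else 0)"
| "GG e (Suc n) k = (\<Sum>s\<le>k. alpha e k s * GG e n (k - s))"

lemma alpha_nonneg: "0 \<le> e \<Longrightarrow> e \<le> 1 \<Longrightarrow> 0 \<le> alpha e r s"
  by (simp add: alpha_def)

lemma GG_nonneg: "0 \<le> e \<Longrightarrow> e \<le> 1 \<Longrightarrow> 0 \<le> GG e n k"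
  by (induction n arbitrary: k) (auto intro!: sum_nonneg mult_nonneg_nonneg alpha_nonneg)

lemma geom_tail: "k \<le> r \<Longrightarrow> (\<Sum>s\<in>{k..<r}. (1 - e) * e ^ s) = e ^ k - (e::real) ^ r"
proof (induction r rule: dec_induct)
  case base thus ?case by simp
next
  case (step r) thus ?case by (simp add: algebra_simps)
qed

lemma alpha_tail: "k \<le> r \<Longrightarrow> (\<Sum>s\<in>{k..r}. alpha e r s) = e ^ k"
proof -
  assume kr: "k \<le> r"
  have "{k..r} = insert r {k..<r}" using kr by auto
  hence "(\<Sum>s\<in>{k..r}. alpha e r s) = alpha e r r + (\<Sum>s\<in>{k..<r}. alpha e r s)" by simp
  also have "(\<Sum>s\<in>{k..<r}. alpha e r s) = (\<Sum>s\<in>{k..<r}. (1 - e) * e ^ s)"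
    by (intro sum.cong) (auto simp: alpha_def)
  finally show ?thesis using geom_tail[OF kr, of e] by (simp add: alpha_def)
qed

lemma alpha_sum: "(\<Sum>s\<le>r. alpha e r s) = 1"
  using alpha_tail[of 0 r e] by (simp add: atLeast0AtMost)

lemma GG_0: "GG e n 0 = 1"
  by (induction n) (simp_all add: alpha_def)

lemma GG_rec:
  assumes "k \<le> r"
  shows "GG e (Suc n) k = (\<Sum>s\<le>r. alpha e r s * GG e n (k - s))"
proof -
  have split: "{..r} = {..<k} \<union> {k..r}" using assms by auto
  have "(\<Sum>s\<le>r. alpha e r s * GG e n (k - s)) =
        (\<Sum>s<k. alpha e r s * GG e n (k - s)) + (\<Sum>s\<in>{k..r}. alpha e r s * GG e n (k - s))"
    unfolding split by (rule sum.union_disjoint) auto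
  also have "(\<Sum>s\<in>{k..r}. alpha e r s * GG e n (k - s)) = (\<Sum>s\<in>{k..r}. alpha e r s)"
    by (intro sum.cong) (auto simp: GG_0)
  also have "\<dots> = e ^ k" using alpha_tail[OF assms] .
  also have "(\<Sum>s<k. alpha e r s * GG e n (k - s)) = (\<Sum>s<k. alpha e k s * GG e n (k - s))"
    using assms by (intro sum.cong) (auto simp: alpha_def)
  finally have "(\<Sum>s\<le>r. alpha e r s * GG e n (k - s)) = (\<Sum>s<k. alpha e k s * GG e n (k - s)) + e ^ k" .
  moreover have "GG e (Suc n) k = (\<Sum>s<k. alpha e k s * GG e n (k - s)) + alpha e k k * GG e n 0"
    by (simp add: lessThan_Suc_atMost[symmetric])
  ultimately show ?thesis by (simp add: alpha_def GG_0)
qed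


definition pm :: "real \<Rightarrow> nat \<Rightarrow> nat \<Rightarrow> real" where
  "pm e n j = real ((n + j - 1) choose j) * (1 - e) ^ n * e ^ j"

definition HH :: "real \<Rightarrow> nat \<Rightarrow> nat \<Rightarrow> real" where
  "HH e n k = (\<Sum>j<k. pm e n j)"

lemma pm_conv:
  assumes "n \<ge> 1"
  shows "(\<Sum>s\<le>j. (1 - e) * e ^ s * pm e n (j - s)) = pm e (Suc n) j"
proof -
  have "(\<Sum>s\<le>j. (1 - e) * e ^ s * pm e n (j - s))
      = (\<Sum>s\<le>j. (1 - e) ^ Suc n * e ^ j * real ((n - 1 + (j - s)) choose (j - s)))"
  proof (intro sum.cong refl)
    fix s assume "s \<in> {..j}"
    hence sj: "s \<le> j" by simp
    have ej: "e ^ s * e ^ (j - s) = e ^ j" using sj by (simp add: power_add[symmetric])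
    have C: "n + (j - s) - 1 = n - 1 + (j - s)" using assms by simp
    show "(1 - e) * e ^ s * pm e n (j - s) =
        (1 - e) ^ Suc n * e ^ j * real ((n - 1 + (j - s)) choose (j - s))"
      unfolding pm_def C ej[symmetric] by (simp only: power_Suc mult_ac)
  qed
  also have "\<dots> = (1 - e) ^ Suc n * e ^ j * (\<Sum>s\<le>j. real ((n - 1 + (j - s)) choose (j - s)))"
    by (simp add: sum_distrib_left)
  also have "(\<Sum>s\<le>j. real ((n - 1 + (j - s)) choose (j - s))) = (\<Sum>s\<le>j. real ((n - 1 + s) choose s))"
    unfolding atLeast0AtMost[symmetric]
    by (subst sum.atLeastAtMost_rev) simp
  also have "\<dots> = real ((n + j) choose j)"
    using sum_choose_lower[of "n - 1" j] assms by (simp flip: of_nat_sum)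
  finally show ?thesis unfolding pm_def by simp
qed

lemma HH_0: "HH e n 0 = 0" by (simp add: HH_def)

lemma HH_Suc: "HH e n (Suc k) = HH e n k + pm e n k" by (simp add: HH_def)

lemma HH_rec:
  assumes "n \<ge> 1"
  shows "HH e (Suc n) k = (\<Sum>s<k. (1 - e) * e ^ s * HH e n (k - s))"
proof (induction k)
  case 0 thus ?case by (simp add: HH_0)
next
  case (Suc k)
  have "(\<Sum>s<Suc k. (1 - e) * e ^ s * HH e n (Suc k - s))
      = (\<Sum>s\<le>k. (1 - e) * e ^ s * (HH e n (k - s) + pm e n (k - s)))"
    unfolding lessThan_Suc_atMost
    by (intro sum.cong refl) (simp add: Suc_diff_le HH_Suc)
  also have "\<dots> = (\<Sum>s\<le>k. (1 - e) * e ^ s * HH e n (k - s)) + (\<Sum>s\<le>k. (1 - e) * e ^ s * pm e n (k - s))"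
    by (simp only: distrib_left sum.distrib)
  also have "(\<Sum>s\<le>k. (1 - e) * e ^ s * HH e n (k - s)) = (\<Sum>s<k. (1 - e) * e ^ s * HH e n (k - s))"
    unfolding lessThan_Suc_atMost[symmetric] by (simp add: HH_0)
  also have "(\<Sum>s\<le>k. (1 - e) * e ^ s * pm e n (k - s)) = pm e (Suc n) k"
    using pm_conv[OF assms] .
  finally show ?case using Suc by (simp add: HH_Suc)
qed

lemma GG_HH:
  assumes "n \<ge> 1"
  shows "GG e n k = 1 - HH e n k"
  using assms
proof (induction n arbitrary: k)
  case 0 thus ?case by simp
next
  case (Suc n)
  show ?case
  proof (cases "n = 0")
    case True
    have "GG e (Suc 0) k = alpha e k k"
      by (simp add: lessThan_Suc_atMost[symmetric])
    also have "\<dots> = e ^ k" by (simp add: alpha_def)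
    finally have a: "GG e (Suc 0) k = e ^ k" .
    have "HH e (Suc 0) k = (\<Sum>j<k. (1 - e) * e ^ j)"
      unfolding HH_def pm_def by (intro sum.cong) auto
    also have "\<dots> = 1 - e ^ k" using geom_tail[of 0 k e] by (simp add: atLeast0LessThan)
    finally show ?thesis using True a by simp
  next
    case False
    hence n1: "n \<ge> 1" by simp
    have "GG e (Suc n) k = (\<Sum>s\<le>k. alpha e k s * (1 - HH e n (k - s)))"
      using Suc.IH[OF n1] by simp
    also have "\<dots> = (\<Sum>s\<le>k. alpha e k s) - (\<Sum>s\<le>k. alpha e k s * HH e n (k - s))"
      by (simp add: algebra_simps sum_subtractf)
    also have "(\<Sum>s\<le>k. alpha e k s * HH e n (k - s)) = (\<Sum>s<k. alpha e k s * HH e n (k - s))"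
      unfolding lessThan_Suc_atMost[symmetric] by (simp add: HH_0)
    also have "\<dots> = (\<Sum>s<k. (1 - e) * e ^ s * HH e n (k - s))"
      by (intro sum.cong) (auto simp: alpha_def)
    also have "\<dots> = HH e (Suc n) k" using HH_rec[OF n1] by simp
    finally show ?thesis by (simp add: alpha_sum)
  qed
qed

lemma pm_sums:
  assumes "n \<ge> 1" "0 \<le> e" "e < 1"
  shows "pm e n sums 1"
proof -
  have "\<bar>-e\<bar> < 1" using assms by simp
  from gen_binomial_real[OF this, of "- real n"]
  have s0: "(\<lambda>j. (- real n gchoose j) * (- e) ^ j) sums (1 + - e) powr (- real n)" .
  have eqj: "(- real n gchoose j) * (- e) ^ j = real ((n + j - 1) choose j) * e ^ j" for j
  proof -
    have r: "real n + real j - 1 = real (n + j - 1)" using assms by simp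
    have g: "(- real n gchoose j) = (-1) ^ j * (real (n + j - 1) gchoose j)"
      using gbinomial_minus[of "real n" j] unfolding r .
    have g2: "(real (n + j - 1) gchoose j) = real ((n + j - 1) choose j)"
      by (rule binomial_gbinomial[symmetric])
    have pm: "(- e) ^ j = (-1) ^ j * e ^ j" by (rule power_minus)
    have m1: "(-1::real) ^ j * (-1) ^ j = 1"
    proof -
      have "(-1::real) ^ j * (-1) ^ j = ((-1) * (-1)) ^ j" by (rule power_mult_distrib[symmetric])
      thus ?thesis by simp
    qed
    have "(- real n gchoose j) * (- e) ^ j = ((-1) ^ j * (-1) ^ j) * (real ((n + j - 1) choose j) * e ^ j)"
      unfolding g g2 pm by (simp only: mult_ac)
    thus ?thesis unfolding m1 by simp
  qed
  have f: "(\<lambda>j. (- real n gchoose j) * (- e) ^ j) = (\<lambda>j. real ((n + j - 1) choose j) * e ^ j)"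
    by (rule ext) (rule eqj)
  have "(\<lambda>j. real ((n + j - 1) choose j) * e ^ j) sums (1 - e) powr (- real n)"
    using s0 unfolding f by simp
  hence s1: "(\<lambda>j. (1 - e) ^ n * (real ((n + j - 1) choose j) * e ^ j)) sums ((1 - e) ^ n * (1 - e) powr (- real n))"
    by (rule sums_mult)
  have pos: "0 < 1 - e" using assms by simp
  have "(1 - e) powr (- real n) = inverse ((1 - e) ^ n)"
    using pos by (simp only: powr_minus powr_realpow)
  hence one: "(1 - e) ^ n * (1 - e) powr (- real n) = 1" using pos by simp
  have f2: "(\<lambda>j. (1 - e) ^ n * (real ((n + j - 1) choose j) * e ^ j)) = pm e n"
    by (rule ext) (simp only: pm_def mult_ac)
  show ?thesis using s1 unfolding one f2 .
qed

lemma GG_inc_beta: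
  assumes "n \<ge> 1" "0 \<le> e" "e < 1"
  shows "GG e n k = inc_beta e k n"
proof -
  have s1: "pm e n sums 1" using pm_sums[OF assms] .
  have s2: "(\<lambda>j. if j \<in> {..<k} then pm e n j else 0) sums HH e n k"
    unfolding HH_def by (rule sums_If_finite_set) simp
  have "(\<lambda>j. pm e n j - (if j \<in> {..<k} then pm e n j else 0)) sums (1 - HH e n k)"
    by (rule sums_diff[OF s1 s2])
  moreover have "(\<lambda>j. pm e n j - (if j \<in> {..<k} then pm e n j else 0))
     = (\<lambda>j. (1 - e) ^ n * (if k \<le> j then real ((n + j - 1) choose j) * e ^ j else 0))"
    by (auto simp: pm_def)
  ultimately have s3: "(\<lambda>j. (1 - e) ^ n * (if k \<le> j then real ((n + j - 1) choose j) * e ^ j else 0)) sums (1 - HH e n k)"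
    by simp
  have "(1 - e) ^ n \<noteq> 0" using assms by simp
  have "(\<lambda>j. (1 - e) ^ n * (if k \<le> j then real ((n + j - 1) choose j) * e ^ j else 0) / (1 - e) ^ n) sums ((1 - HH e n k) / (1 - e) ^ n)"
    by (rule sums_divide[OF s3])
  hence "(\<lambda>j. (if k \<le> j then real ((n + j - 1) choose j) * e ^ j else 0)) sums ((1 - HH e n k) / (1 - e) ^ n)"
    using \<open>(1 - e) ^ n \<noteq> 0\<close> assms(3) by simp
  hence "(\<Sum>j. if k \<le> j then real ((n + j - 1) choose j) * e ^ j else 0) = (1 - HH e n k) / (1 - e) ^ n"
    by (rule sums_unique[symmetric])
  thus ?thesis unfolding inc_beta_def using GG_HH[OF assms(1)] \<open>(1 - e) ^ n \<noteq> 0\<close> by simp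
qed


lemma mlin_eval_cong:
  assumes "\<And>i. i < n \<Longrightarrow> y i = y' i"
  shows "mlin_eval n c y = mlin_eval n c y'"
  unfolding mlin_eval_def
proof (intro sum.cong refl)
  fix S assume "S \<in> Pow {..<n}"
  hence "\<forall>i\<in>S. y i = y' i" using assms by auto
  thus "c S * prod y S = c S * prod y' S" by (simp cong: prod.cong)
qed

lemma mlin_eval_Suc:
  "mlin_eval (Suc n) c y = y n * mlin_eval n (\<lambda>S. c (insert n S)) y + mlin_eval n c y"
proof -
  have P: "Pow {..<Suc n} = Pow {..<n} \<union> insert n ` Pow {..<n}"
    by (simp add: lessThan_Suc Pow_insert)
  have disj: "Pow {..<n} \<inter> insert n ` Pow {..<n} = {}" by auto
  have inj: "inj_on (insert n) (Pow {..<n})"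
    by (rule inj_onI) (metis PowD insert_ident lessThan_iff order_less_irrefl subset_iff)
  have "mlin_eval (Suc n) c y = (\<Sum>S\<in>Pow {..<n}. c S * prod y S) + (\<Sum>S\<in>insert n ` Pow {..<n}. c S * prod y S)"
    unfolding mlin_eval_def P by (rule sum.union_disjoint) (use disj in auto)
  also have "(\<Sum>S\<in>insert n ` Pow {..<n}. c S * prod y S) = (\<Sum>S\<in>Pow {..<n}. c (insert n S) * prod y (insert n S))"
    by (subst sum.reindex[OF inj]) simp
  also have "\<dots> = (\<Sum>S\<in>Pow {..<n}. y n * (c (insert n S) * prod y S))"
  proof (intro sum.cong refl)
    fix S assume "S \<in> Pow {..<n}"
    hence "finite S" "n \<notin> S" by (auto intro: finite_subset)
    thus "c (insert n S) * prod y (insert n S) = y n * (c (insert n S) * prod y S)" by simp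
  qed
  finally show ?thesis unfolding mlin_eval_def by (simp add: sum_distrib_left)
qed

lemma prime_powers_dvd_iff:
  fixes P :: "nat set"
  assumes "finite P" "\<forall>p\<in>P. prime p"
  shows "int (\<Prod>p\<in>P. p ^ f p) dvd y \<longleftrightarrow> (\<forall>p\<in>P. int p ^ f p dvd y)"
  using assms
proof (induction P rule: finite_induct)
  case empty thus ?case by simp
next
  case (insert q P)
  have cop: "coprime (int q ^ f q) (int (\<Prod>p\<in>P. p ^ f p))"
  proof -
    have "coprime (q ^ f q) (\<Prod>p\<in>P. p ^ f p)"
      by (rule prod_coprime_right) (use insert in \<open>auto intro: primes_coprime\<close>)
    hence "coprime (int (q ^ f q)) (int (\<Prod>p\<in>P. p ^ f p))" by (simp only: coprime_int_iff)
    thus ?thesis by (simp only: of_nat_power)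
  qed
  have "int (\<Prod>p\<in>insert q P. p ^ f p) = int q ^ f q * int (\<Prod>p\<in>P. p ^ f p)"
    using insert by simp
  moreover have "int q ^ f q * int (\<Prod>p\<in>P. p ^ f p) dvd y \<longleftrightarrow> int q ^ f q dvd y \<and> int (\<Prod>p\<in>P. p ^ f p) dvd y"
    using cop by (auto intro: divides_mult dvd_mult_left dvd_mult_right)
  ultimately show ?case using insert by auto
qed

lemma card_progression:
  fixes T :: "nat set" and M m :: nat
  assumes "T \<subseteq> {0..<m}" "M > 0" "\<forall>t\<in>T. \<forall>t'\<in>T. int M dvd int t - int t'"
  shows "real (card T) \<le> real m / real M + 1"
proof (cases "T = {}")
  case True thus ?thesis by simp
next
  case False
  have fin: "finite T" using assms(1) finite_subset by blast
  define t0 where "t0 = Min T"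
  have t0T: "t0 \<in> T" using fin False by (simp add: t0_def)
  have t0le: "\<And>t. t \<in> T \<Longrightarrow> t0 \<le> t" using fin by (simp add: t0_def)
  have m0: "m > 0" using t0T assms(1) by auto
  define phi where "phi t = (t - t0) div M" for t
  have dv: "M dvd t - t0" if "t \<in> T" for t
  proof -
    have "int M dvd int t - int t0" using assms(3) that t0T by blast
    also have "int t - int t0 = int (t - t0)" using t0le[OF that] by simp
    finally show ?thesis by simp
  qed
  have rep: "t = t0 + M * phi t" if "t \<in> T" for t
    using dv[OF that] t0le[OF that] unfolding phi_def by simp
  have "inj_on phi T" by (rule inj_onI) (metis rep)
  moreover have "phi ` T \<subseteq> {..(m - 1) div M}"
  proof
    fix i assume "i \<in> phi ` T"
    then obtain t where t: "t \<in> T" "i = phi t" by auto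
    have "t - t0 \<le> m - 1" using t assms(1) by auto
    thus "i \<in> {..(m - 1) div M}" unfolding t phi_def by (simp add: div_le_mono)
  qed
  ultimately have "card T \<le> Suc ((m - 1) div M)"
    by (metis card_atMost card_image card_mono finite_atMost)
  hence "real (card T) \<le> real ((m - 1) div M) + 1" by simp
  also have "real ((m - 1) div M) \<le> real (m - 1) / real M" by (rule of_nat_div_le_of_nat)
  also have "\<dots> \<le> real m / real M" using assms(2) by (simp add: divide_right_mono)
  finally show ?thesis by simp
qed


lemma ind_sum_alpha:
  fixes p :: nat and d r :: nat
  assumes "d \<le> r"
  shows "(\<Sum>s\<le>r. alpha e r s * (if r - s \<le> d then 1 else 0)) = e ^ (r - d)"
proof -
  have "(\<Sum>s\<le>r. alpha e r s * (if r - s \<le> d then 1 else 0)) = (\<Sum>s\<in>{s\<in>{..r}. r - s \<le> d}. alpha e r s)"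
  proof -
    have "(\<Sum>s\<le>r. alpha e r s * (if r - s \<le> d then 1 else 0)) = (\<Sum>s\<le>r. if r - s \<le> d then alpha e r s else 0)"
      by (intro sum.cong) auto
    also have "\<dots> = (\<Sum>s\<in>{s\<in>{..r}. r - s \<le> d}. alpha e r s)"
      by (rule sum.inter_filter[symmetric]) simp
    finally show ?thesis .
  qed
  also have "{s\<in>{..r}. r - s \<le> d} = {r - d..r}" using assms by auto
  finally show ?thesis using alpha_tail[of "r - d" r e] by simp
qed

lemma line_bound:
  fixes a b :: "'c \<Rightarrow> int" and P :: "nat set" and r :: "nat \<Rightarrow> nat"
  assumes finP: "finite P" and prP: "\<forall>p\<in>P. prime p"
  shows "real (card {t \<in> {0..<m}. \<forall>c\<in>C. int (\<Prod>p\<in>P. p ^ r p) dvd int t * a c + b c})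
    \<le> 1 + real m * (\<Prod>p\<in>P. \<Sum>s\<le>r p. alpha (1 / real p) (r p) s *
          (if \<forall>c\<in>C. int p ^ (r p - s) dvd a c \<and> int p ^ (r p - s) dvd b c then 1 else 0))"
proof -
  define N where "N = (\<Prod>p\<in>P. p ^ r p)"
  define T where "T = {t \<in> {0..<m}. \<forall>c\<in>C. int N dvd int t * a c + b c}"
  define Q where "Q p s \<longleftrightarrow> (\<forall>c\<in>C. int p ^ s dvd a c \<and> int p ^ s dvd b c)" for p s
  define D where "D p = {s. s \<le> r p \<and> Q p s}" for p
  define d where "d p = Max (D p)" for p
  have pos: "p \<in> P \<Longrightarrow> p > 0" for p using prP prime_gt_0_nat by blast
  have e01: "p \<in> P \<Longrightarrow> 0 \<le> 1 / real p \<and> 1 / real p \<le> 1" for p using pos[of p] by simp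
  have finD: "finite (D p)" for p unfolding D_def by auto
  have D0: "0 \<in> D p" for p unfolding D_def Q_def by simp
  have dD: "d p \<in> D p" for p unfolding d_def using finD D0 Max_in by blast
  have dle: "d p \<le> r p" for p using dD[of p] by (simp add: D_def)
  have Qmono: "Q p s" if "Q p s'" "s \<le> s'" for p s s'
    using that unfolding Q_def by (meson dvd_trans le_imp_power_dvd)
  have Q_iff: "Q p s \<longleftrightarrow> s \<le> d p" if "s \<le> r p" for p s
  proof
    assume "Q p s" hence "s \<in> D p" using that by (simp add: D_def)
    thus "s \<le> d p" unfolding d_def using finD by simp
  next
    assume "s \<le> d p" thus "Q p s" using dD[of p] Qmono by (auto simp: D_def)
  qed
  have nonneg: "0 \<le> (\<Prod>p\<in>P. \<Sum>s\<le>r p. alpha (1 / real p) (r p) s * (if Q p (r p - s) then 1 else 0))"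
    using e01 by (intro prod_nonneg sum_nonneg mult_nonneg_nonneg alpha_nonneg) auto
  have "real (card T) \<le> 1 + real m * (\<Prod>p\<in>P. \<Sum>s\<le>r p. alpha (1 / real p) (r p) s * (if Q p (r p - s) then 1 else 0))"
  proof (cases "T = {}")
    case True thus ?thesis using nonneg by simp
  next
    case False
    then obtain t0 where t0: "t0 \<in> T" by auto
    define M where "M = (\<Prod>p\<in>P. p ^ (r p - d p))"
    have Mpos: "M > 0" unfolding M_def using pos by (simp add: prod_pos)
    have key: "int M dvd int t - int t0" if tT: "t \<in> T" for t
    proof -
      define u where "u = int t - int t0"
      have pp: "int p ^ (r p - d p) dvd u" if pP: "p \<in> P" for p
      proof -
        have pr: "prime (int p)" using prP pP by simp
        have pN: "int p ^ r p dvd int N"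
          unfolding N_def using prime_powers_dvd_iff[OF finP prP, of r "int N"] pP N_def by auto
        have au: "int p ^ r p dvd a c * u" if "c \<in> C" for c
        proof -
          have "int N dvd int t * a c + b c" "int N dvd int t0 * a c + b c"
            using tT t0 that by (auto simp: T_def)
          hence "int N dvd (int t * a c + b c) - (int t0 * a c + b c)" by (rule dvd_diff)
          also have "(int t * a c + b c) - (int t0 * a c + b c) = a c * u" by (simp add: u_def algebra_simps)
          finally show ?thesis using pN dvd_trans by blast
        qed
        have "\<forall>s. s \<le> r p - d p \<longrightarrow> int p ^ s dvd u"
        proof
          fix s show "s \<le> r p - d p \<longrightarrow> int p ^ s dvd u"
          proof (induction s)
            case 0 thus ?case by simp
          next
            case (Suc s)
            show ?case
            proof
              assume ss: "Suc s \<le> r p - d p"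
              hence "int p ^ s dvd u" using Suc by simp
              then obtain u' where u': "u = int p ^ s * u'" by (auto elim: dvdE)
              show "int p ^ Suc s dvd u"
              proof (cases "int p dvd u'")
                case True thus ?thesis using u' by (auto simp: mult_dvd_mono)
              next
                case False
                have cop: "coprime (int p ^ (r p - s)) u'"
                  using prime_imp_coprime[OF pr False] by simp
                have sr: "s \<le> r p" using ss by simp
                have "Q p (r p - s)" unfolding Q_def
                proof
                  fix c assume cC: "c \<in> C"
                  have "int p ^ s * int p ^ (r p - s) dvd int p ^ s * (a c * u')"
                    using au[OF cC] sr unfolding u' by (simp add: power_add[symmetric] mult_ac)
                  hence "int p ^ (r p - s) dvd a c * u'" using pos[OF pP] by simp
                  hence ad: "int p ^ (r p - s) dvd a c" using cop by (simp add: coprime_dvd_mult_left_iff)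
                  have "int p ^ (r p - s) dvd int p ^ r p" by (simp add: le_imp_power_dvd)
                  hence "int p ^ (r p - s) dvd int N" using pN dvd_trans by blast
                  hence "int p ^ (r p - s) dvd int t0 * a c + b c"
                    using t0 cC by (auto simp: T_def intro: dvd_trans)
                  moreover have "int p ^ (r p - s) dvd int t0 * a c" using ad by simp
                  ultimately have "int p ^ (r p - s) dvd b c" by (simp add: dvd_add_right_iff)
                  thus "int p ^ (r p - s) dvd a c \<and> int p ^ (r p - s) dvd b c" using ad by simp
                qed
                hence "r p - s \<le> d p" using Q_iff[of "r p - s" p] by simp
                thus ?thesis using ss by simp
              qed
            qed
          qed
        qed
        thus ?thesis by simp
      qed
      show ?thesis unfolding M_def using pp by (subst prime_powers_dvd_iff[OF finP prP]) (simp add: u_def)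
    qed
    have pw: "\<forall>t\<in>T. \<forall>t'\<in>T. int M dvd int t - int t'"
    proof (intro ballI)
      fix t t' assume "t \<in> T" "t' \<in> T"
      hence "int M dvd (int t - int t0) - (int t' - int t0)" using key dvd_diff by blast
      thus "int M dvd int t - int t'" by simp
    qed
    have "real (card T) \<le> real m / real M + 1"
      by (rule card_progression[OF _ Mpos pw]) (auto simp: T_def)
    also have "real m / real M = real m * (\<Prod>p\<in>P. (1 / real p) ^ (r p - d p))"
      unfolding M_def by (simp add: prod_dividef power_one_over)
    also have "(\<Prod>p\<in>P. (1 / real p) ^ (r p - d p)) =
        (\<Prod>p\<in>P. \<Sum>s\<le>r p. alpha (1 / real p) (r p) s * (if Q p (r p - s) then 1 else 0))"
    proof (intro prod.cong refl)
      fix p assume "p \<in> P"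
      have "(\<Sum>s\<le>r p. alpha (1 / real p) (r p) s * (if Q p (r p - s) then 1 else 0)) =
            (\<Sum>s\<le>r p. alpha (1 / real p) (r p) s * (if r p - s \<le> d p then 1 else 0))"
        by (intro sum.cong refl) (simp add: Q_iff)
      also have "\<dots> = (1 / real p) ^ (r p - d p)" by (rule ind_sum_alpha[OF dle])
      finally show "(1 / real p) ^ (r p - d p) = (\<Sum>s\<le>r p. alpha (1 / real p) (r p) s * (if Q p (r p - s) then 1 else 0))" by simp
    qed
    finally show ?thesis by simp
  qed
  thus ?thesis unfolding T_def N_def Q_def .
qed


lemma prod_ind:
  assumes "finite P"
  shows "(\<Prod>p\<in>P. (if Q p then 1 else 0 :: real)) = (if \<forall>p\<in>P. Q p then 1 else 0)"
  using assms by (induction P rule: finite_induct) auto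

lemma card_split:
  "card {x \<in> PiE {..<Suc n} (\<lambda>_. {0..<m::nat}). Pr x} =
     (\<Sum>g\<in>PiE {..<n} (\<lambda>_. {0..<m}). card {y\<in>{0..<m}. Pr (g(n:=y))})"
proof -
  define B where "B = (\<lambda>_::nat. {0..<m})"
  define X where "X = PiE {..<n} B"
  define f where "f = (\<lambda>(y, g). g(n := y) :: nat \<Rightarrow> nat)"
  have E: "PiE {..<Suc n} B = f ` ({0..<m} \<times> X)"
    unfolding X_def f_def by (simp add: lessThan_Suc PiE_insert_eq B_def)
  have inj: "inj_on f ({0..<m} \<times> X)"
    using inj_combinator[of n "{..<n}" B] unfolding f_def X_def B_def by simp
  have "{x \<in> PiE {..<Suc n} B. Pr x} = f ` {z \<in> {0..<m} \<times> X. Pr (f z)}"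
    unfolding E by auto
  hence "card {x \<in> PiE {..<Suc n} B. Pr x} = card {z \<in> {0..<m} \<times> X. Pr (f z)}"
    using card_image[OF inj_on_subset[OF inj]] by auto
  also have "{z \<in> {0..<m} \<times> X. Pr (f z)} = (\<lambda>(g, y). (y, g)) ` (SIGMA g:X. {y\<in>{0..<m}. Pr (g(n:=y))})"
    unfolding f_def by auto
  also have "card \<dots> = card (SIGMA g:X. {y\<in>{0..<m}. Pr (g(n:=y))})"
    by (rule card_image) (auto simp: inj_on_def)
  also have "\<dots> = (\<Sum>g\<in>X. card {y\<in>{0..<m}. Pr (g(n:=y))})"
    by (rule card_SigmaI) (auto simp: X_def B_def finite_PiE)
  finally show ?thesis unfolding X_def B_def .
qed


lemma main_lemma:
  fixes P :: "nat set" and m :: nat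
  assumes finP: "finite P" and prP: "\<forall>p\<in>P. prime p" and m0: "m > 0"
  shows "finite F \<Longrightarrow> (\<forall>p\<in>P. \<forall>j. (\<forall>c\<in>F. \<forall>S\<in>Pow {..<n}. int p ^ j dvd c S) \<longrightarrow> k p \<le> r p - j) \<Longrightarrow>
    real (card {x \<in> PiE {..<n} (\<lambda>_. {0..<m}). \<forall>c\<in>F. int (\<Prod>p\<in>P. p ^ r p) dvd mlin_eval n c (\<lambda>i. int (x i))})
    \<le> real m ^ n * (real n / real m + (\<Prod>p\<in>P. GG (1 / real p) n (k p)))"
proof (induction n arbitrary: F r k)
  case 0
  have pos: "p \<in> P \<Longrightarrow> p > 0" for p using prP prime_gt_0_nat by blast
  have e01: "p \<in> P \<Longrightarrow> 0 \<le> 1 / real p \<and> 1 / real p \<le> 1" for p using pos[of p] by simp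
  have ev0: "mlin_eval 0 c y = c {}" for c y by (simp add: mlin_eval_def)
  have nn: "0 \<le> (\<Prod>p\<in>P. GG (1 / real p) 0 (k p))"
    using e01 by (intro prod_nonneg GG_nonneg) auto
  show ?case
  proof (cases "\<forall>c\<in>F. int (\<Prod>p\<in>P. p ^ r p) dvd c {}")
    case True
    have "k p = 0" if pP: "p \<in> P" for p
    proof -
      have "int p ^ r p dvd int (\<Prod>p\<in>P. p ^ r p)"
        using prime_powers_dvd_iff[OF finP prP, of r "int (\<Prod>p\<in>P. p ^ r p)"] pP by auto
      hence "\<forall>c\<in>F. \<forall>S\<in>Pow {..<0}. int p ^ r p dvd c S" using True by (auto intro: dvd_trans)
      thus ?thesis using "0.prems"(2) pP by fastforce
    qed
    hence "(\<Prod>p\<in>P. GG (1 / real p) 0 (k p)) = 1" by simp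
    moreover have "card {x \<in> PiE {..<0::nat} (\<lambda>_. {0..<m}). \<forall>c\<in>F. int (\<Prod>p\<in>P. p ^ r p) dvd mlin_eval 0 c (\<lambda>i. int (x i))} \<le> 1"
      by (rule order_trans[OF card_mono[of "{\<lambda>_. undefined}"]]) auto
    ultimately show ?thesis by simp
  next
    case False
    hence E: "{x \<in> PiE {..<0::nat} (\<lambda>_. {0..<m}). \<forall>c\<in>F. int (\<Prod>p\<in>P. p ^ r p) dvd mlin_eval 0 c (\<lambda>i. int (x i))} = {}"
      by (auto simp: ev0)
    show ?thesis unfolding E using nn by simp
  qed
next
  case (Suc n)
  note IH = Suc.IH and finF = Suc.prems(1) and hyp = Suc.prems(2)
  have pos: "p \<in> P \<Longrightarrow> p > 0" for p using prP prime_gt_0_nat by blast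
  have e01: "p \<in> P \<Longrightarrow> 0 \<le> 1 / real p \<and> 1 / real p \<le> 1" for p using pos[of p] by simp
  define N where "N = (\<Prod>p\<in>P. p ^ r p)"
  define X where "X = PiE {..<n} (\<lambda>_::nat. {0..<m})"
  define a where "a g c = mlin_eval n (\<lambda>S. c (insert n S)) (\<lambda>i. int (g i))" for g :: "nat \<Rightarrow> nat" and c
  define b where "b g c = mlin_eval n c (\<lambda>i. int (g i))" for g :: "nat \<Rightarrow> nat" and c
  define T where "T g = {y\<in>{0..<m}. \<forall>c\<in>F. int N dvd int y * a g c + b g c}" for g
  define F' where "F' = (\<lambda>c S. c (insert n S)) ` F \<union> F"
  define Z where "Z = PiE P (\<lambda>p. {..r p})"
  define w where "w z = (\<Prod>p\<in>P. alpha (1 / real p) (r p) (z p))" for z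
  define Bz where "Bz z = {g \<in> X. \<forall>c\<in>F'. int (\<Prod>p\<in>P. p ^ (r p - z p)) dvd mlin_eval n c (\<lambda>i. int (g i))}" for z
  have finX: "finite X" unfolding X_def by (simp add: finite_PiE)
  have finZ: "finite Z" unfolding Z_def using finP by (simp add: finite_PiE)
  have wnn: "0 \<le> w z" for z unfolding w_def using e01 by (intro prod_nonneg alpha_nonneg) auto
  have krp: "k p \<le> r p" if "p \<in> P" for p
  proof -
    have "\<forall>c\<in>F. \<forall>S\<in>Pow {..<Suc n}. int p ^ 0 dvd c S" by simp
    thus ?thesis using hyp that by fastforce
  qed
  have step1: "card {x \<in> PiE {..<Suc n} (\<lambda>_. {0..<m}). \<forall>c\<in>F. int N dvd mlin_eval (Suc n) c (\<lambda>i. int (x i))}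
      = (\<Sum>g\<in>X. card (T g))"
    unfolding card_split X_def
  proof (intro sum.cong refl arg_cong[where f=card])
    fix g assume "g \<in> PiE {..<n} (\<lambda>_. {0..<m})"
    have "mlin_eval (Suc n) c (\<lambda>i. int ((g(n := y)) i)) = int y * a g c + b g c" for c y
    proof -
      have "mlin_eval n c' (\<lambda>i. int ((g(n := y)) i)) = mlin_eval n c' (\<lambda>i. int (g i))" for c'
        by (rule mlin_eval_cong) simp
      thus ?thesis unfolding a_def b_def by (simp add: mlin_eval_Suc)
    qed
    thus "{y \<in> {0..<m}. \<forall>c\<in>F. int N dvd mlin_eval (Suc n) c (\<lambda>i. int ((g(n := y)) i))} = T g"
      unfolding T_def by simp
  qed
  have step2: "real (card (T g)) \<le> 1 + real m * (\<Sum>z\<in>Z. w z * (if g \<in> Bz z then 1 else 0))"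
    if gX: "g \<in> X" for g
  proof -
    have "real (card (T g)) \<le> 1 + real m * (\<Prod>p\<in>P. \<Sum>s\<le>r p. alpha (1 / real p) (r p) s *
          (if \<forall>c\<in>F. int p ^ (r p - s) dvd a g c \<and> int p ^ (r p - s) dvd b g c then 1 else 0))"
      unfolding T_def N_def by (rule line_bound[OF finP prP])
    also have "(\<Prod>p\<in>P. \<Sum>s\<le>r p. alpha (1 / real p) (r p) s *
          (if \<forall>c\<in>F. int p ^ (r p - s) dvd a g c \<and> int p ^ (r p - s) dvd b g c then 1 else 0))
        = (\<Sum>z\<in>Z. \<Prod>p\<in>P. alpha (1 / real p) (r p) (z p) *
          (if \<forall>c\<in>F. int p ^ (r p - z p) dvd a g c \<and> int p ^ (r p - z p) dvd b g c then 1 else 0))"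
      unfolding Z_def by (rule prod_sum_PiE[OF finP]) simp
    also have "\<dots> = (\<Sum>z\<in>Z. w z * (if g \<in> Bz z then 1 else 0))"
    proof (intro sum.cong refl)
      fix z assume "z \<in> Z"
      have "(\<Prod>p\<in>P. alpha (1 / real p) (r p) (z p) *
          (if \<forall>c\<in>F. int p ^ (r p - z p) dvd a g c \<and> int p ^ (r p - z p) dvd b g c then 1 else 0))
        = w z * (\<Prod>p\<in>P. (if \<forall>c\<in>F. int p ^ (r p - z p) dvd a g c \<and> int p ^ (r p - z p) dvd b g c then 1 else 0))"
        unfolding w_def by (rule prod.distrib)
      also have "(\<Prod>p\<in>P. (if \<forall>c\<in>F. int p ^ (r p - z p) dvd a g c \<and> int p ^ (r p - z p) dvd b g c then 1 else 0 :: real))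
          = (if \<forall>p\<in>P. \<forall>c\<in>F. int p ^ (r p - z p) dvd a g c \<and> int p ^ (r p - z p) dvd b g c then 1 else 0)"
        by (rule prod_ind[OF finP])
      also have "(\<forall>p\<in>P. \<forall>c\<in>F. int p ^ (r p - z p) dvd a g c \<and> int p ^ (r p - z p) dvd b g c) \<longleftrightarrow> g \<in> Bz z"
      proof -
        have "g \<in> Bz z \<longleftrightarrow> (\<forall>c\<in>F. int (\<Prod>p\<in>P. p ^ (r p - z p)) dvd a g c \<and> int (\<Prod>p\<in>P. p ^ (r p - z p)) dvd b g c)"
          unfolding Bz_def F'_def a_def b_def using gX by auto
        also have "\<dots> \<longleftrightarrow> (\<forall>c\<in>F. \<forall>p\<in>P. int p ^ (r p - z p) dvd a g c \<and> int p ^ (r p - z p) dvd b g c)"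
          by (simp only: prime_powers_dvd_iff[OF finP prP]) blast
        finally show ?thesis by blast
      qed
      finally show "(\<Prod>p\<in>P. alpha (1 / real p) (r p) (z p) *
          (if \<forall>c\<in>F. int p ^ (r p - z p) dvd a g c \<and> int p ^ (r p - z p) dvd b g c then 1 else 0))
        = w z * (if g \<in> Bz z then 1 else 0)" by simp
    qed
    finally show ?thesis .
  qed
  have cardB: "real (card (Bz z)) = (\<Sum>g\<in>X. (if g \<in> Bz z then 1 else 0))" for z
  proof -
    have "Bz z = {g\<in>X. g \<in> Bz z}" unfolding Bz_def by auto
    hence "real (card (Bz z)) = (\<Sum>g\<in>{g\<in>X. g \<in> Bz z}. 1)" by simp
    also have "\<dots> = (\<Sum>g\<in>X. (if g \<in> Bz z then 1 else 0))" by (rule sum.inter_filter[OF finX])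
    finally show ?thesis .
  qed
  have step3: "real (\<Sum>g\<in>X. card (T g)) \<le> real m ^ n + real m * (\<Sum>z\<in>Z. w z * real (card (Bz z)))"
  proof -
    have "real (\<Sum>g\<in>X. card (T g)) \<le> (\<Sum>g\<in>X. 1 + real m * (\<Sum>z\<in>Z. w z * (if g \<in> Bz z then 1 else 0)))"
      unfolding of_nat_sum by (rule sum_mono) (rule step2)
    also have "\<dots> = real (card X) + real m * (\<Sum>z\<in>Z. w z * (\<Sum>g\<in>X. (if g \<in> Bz z then 1 else 0)))"
      by (simp add: sum.distrib sum_distrib_left sum_distrib_right sum.swap[of _ X Z] mult_ac)
    also have "real (card X) = real m ^ n" unfolding X_def by (simp add: card_PiE)
    finally show ?thesis by (simp add: cardB)
  qed
  have step4: "real (card (Bz z)) \<le> real m ^ n * (real n / real m + (\<Prod>p\<in>P. GG (1 / real p) n (k p - z p)))"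
    if "z \<in> Z" for z
  proof -
    have finF': "finite F'" unfolding F'_def using finF by simp
    have hyp': "\<forall>p\<in>P. \<forall>j. (\<forall>c\<in>F'. \<forall>S\<in>Pow {..<n}. int p ^ j dvd c S) \<longrightarrow> k p - z p \<le> (r p - z p) - j"
    proof (intro ballI allI impI)
      fix p j assume pP: "p \<in> P" and dv: "\<forall>c\<in>F'. \<forall>S\<in>Pow {..<n}. int p ^ j dvd c S"
      have "\<forall>c\<in>F. \<forall>S\<in>Pow {..<Suc n}. int p ^ j dvd c S"
      proof (intro ballI)
        fix c S assume cF: "c \<in> F" and S: "S \<in> Pow {..<Suc n}"
        show "int p ^ j dvd c S"
        proof (cases "n \<in> S")
          case True
          have "S - {n} \<in> Pow {..<n}" using S by auto
          moreover have "(\<lambda>S. c (insert n S)) \<in> F'" using cF unfolding F'_def by auto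
          ultimately have "int p ^ j dvd c (insert n (S - {n}))" using dv by fastforce
          thus ?thesis using True by (simp add: insert_absorb)
        next
          case False
          hence "S \<in> Pow {..<n}" using S by (auto simp: less_Suc_eq)
          moreover have "c \<in> F'" using cF unfolding F'_def by auto
          ultimately show ?thesis using dv by blast
        qed
      qed
      hence "k p \<le> r p - j" using hyp pP by blast
      thus "k p - z p \<le> r p - z p - j" by linarith
    qed
    show ?thesis
      using IH[OF finF' hyp'] unfolding Bz_def X_def by simp
  qed
  have sumw: "(\<Sum>z\<in>Z. w z) = 1"
  proof -
    have "(\<Sum>z\<in>Z. w z) = (\<Prod>p\<in>P. \<Sum>s\<le>r p. alpha (1 / real p) (r p) s)"
      unfolding Z_def w_def by (rule prod_sum_PiE[OF finP, symmetric]) simp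
    thus ?thesis by (simp add: alpha_sum)
  qed
  have sumwG: "(\<Sum>z\<in>Z. w z * (\<Prod>p\<in>P. GG (1 / real p) n (k p - z p))) = (\<Prod>p\<in>P. GG (1 / real p) (Suc n) (k p))"
  proof -
    have "(\<Sum>z\<in>Z. w z * (\<Prod>p\<in>P. GG (1 / real p) n (k p - z p)))
        = (\<Sum>z\<in>Z. \<Prod>p\<in>P. alpha (1 / real p) (r p) (z p) * GG (1 / real p) n (k p - z p))"
      unfolding w_def by (simp add: prod.distrib)
    also have "\<dots> = (\<Prod>p\<in>P. \<Sum>s\<le>r p. alpha (1 / real p) (r p) s * GG (1 / real p) n (k p - s))"
      unfolding Z_def by (rule prod_sum_PiE[OF finP, symmetric]) simp
    also have "\<dots> = (\<Prod>p\<in>P. GG (1 / real p) (Suc n) (k p))"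
    proof (intro prod.cong refl)
      fix p assume pP: "p \<in> P"
      show "(\<Sum>s\<le>r p. alpha (1 / real p) (r p) s * GG (1 / real p) n (k p - s)) = GG (1 / real p) (Suc n) (k p)"
        by (rule sym, rule GG_rec[OF krp[OF pP]])
    qed
    finally show ?thesis .
  qed
  have "(\<Sum>z\<in>Z. w z * real (card (Bz z))) \<le>
        (\<Sum>z\<in>Z. w z * (real m ^ n * (real n / real m + (\<Prod>p\<in>P. GG (1 / real p) n (k p - z p)))))"
    by (intro sum_mono mult_left_mono step4 wnn)
  also have "\<dots> = real m ^ n * (real n / real m * (\<Sum>z\<in>Z. w z) + (\<Sum>z\<in>Z. w z * (\<Prod>p\<in>P. GG (1 / real p) n (k p - z p))))"
  proof -
    define M where "M = real m ^ n"
    define A where "A = real n / real m"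
    define Gz where "Gz z = (\<Prod>p\<in>P. GG (1 / real p) n (k p - z p))" for z
    have "(\<Sum>z\<in>Z. w z * (M * (A + Gz z))) = (\<Sum>z\<in>Z. M * A * w z + M * (w z * Gz z))"
      by (intro sum.cong refl) (simp add: algebra_simps)
    also have "\<dots> = M * A * (\<Sum>z\<in>Z. w z) + M * (\<Sum>z\<in>Z. w z * Gz z)"
      by (simp add: sum.distrib sum_distrib_left)
    also have "\<dots> = M * (A * (\<Sum>z\<in>Z. w z) + (\<Sum>z\<in>Z. w z * Gz z))"
      by (simp add: algebra_simps)
    finally show ?thesis unfolding M_def A_def Gz_def .
  qed
  also have "\<dots> = real m ^ n * (real n / real m + (\<Prod>p\<in>P. GG (1 / real p) (Suc n) (k p)))"
    by (simp add: sumw sumwG)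
  finally have b5: "(\<Sum>z\<in>Z. w z * real (card (Bz z))) \<le> real m ^ n * (real n / real m + (\<Prod>p\<in>P. GG (1 / real p) (Suc n) (k p)))" .
  have "real (card {x \<in> PiE {..<Suc n} (\<lambda>_. {0..<m}). \<forall>c\<in>F. int N dvd mlin_eval (Suc n) c (\<lambda>i. int (x i))})
      \<le> real m ^ n + real m * (real m ^ n * (real n / real m + (\<Prod>p\<in>P. GG (1 / real p) (Suc n) (k p))))"
  proof -
    have "real m * (\<Sum>z\<in>Z. w z * real (card (Bz z))) \<le> real m * (real m ^ n * (real n / real m + (\<Prod>p\<in>P. GG (1 / real p) (Suc n) (k p))))"
      by (rule mult_left_mono[OF b5]) simp
    thus ?thesis unfolding step1 using step3 by linarith
  qed
  also have "\<dots> = real m ^ Suc n * (real (Suc n) / real m + (\<Prod>p\<in>P. GG (1 / real p) (Suc n) (k p)))"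
    using m0 by (simp add: field_simps)
  finally show ?case unfolding N_def .
qed


theorem theorem1:
  fixes N :: nat and \<mu> m :: nat and c :: "nat set \<Rightarrow> int"
  assumes "N > 0" and "\<mu> \<ge> 1" and "m > 1"
    and "mlin_coprime \<mu> c (int N)"
  shows "real (card {x \<in> PiE {..<\<mu>} (\<lambda>_. {0..<m}). int N dvd mlin_eval \<mu> c (\<lambda>i. int (x i))})
           / real m ^ \<mu>
         \<le> real \<mu> / real m
           + (\<Prod>p\<in>prime_factors N. inc_beta (1 / real p) (multiplicity p N) \<mu>)"
proof -
  define P where "P = prime_factors N"
  define r where "r p = multiplicity p N" for p
  have finP: "finite P" unfolding P_def by simp
  have prP: "\<forall>p\<in>P. prime p" unfolding P_def by auto
  have m0: "m > 0" using assms(3) by simp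
  have NP: "(\<Prod>p\<in>P. p ^ r p) = N" unfolding P_def r_def using prod_prime_factors[of N] assms(1) by simp
  have hyp: "\<forall>p\<in>P. \<forall>j. (\<forall>c'\<in>{c}. \<forall>S\<in>Pow {..<\<mu>}. int p ^ j dvd c' S) \<longrightarrow> r p \<le> r p - j"
  proof (intro ballI allI impI)
    fix p j assume pP: "p \<in> P" and dv: "\<forall>c'\<in>{c}. \<forall>S\<in>Pow {..<\<mu>}. int p ^ j dvd c' S"
    show "r p \<le> r p - j"
    proof (cases "j = 0")
      case True thus ?thesis by simp
    next
      case False
      have "int p dvd int p ^ j" using False by simp
      hence pc: "\<forall>S\<in>Pow {..<\<mu>}. int p dvd c S" using dv dvd_trans by blast
      have "p dvd N" using pP unfolding P_def by auto
      hence "int p dvd int N" by simp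
      hence "int p dvd Gcd (insert (int N) (c ` Pow {..<\<mu>}))"
        using pc by (intro Gcd_greatest) auto
      moreover have g: "Gcd (insert (int N) (c ` Pow {..<\<mu>})) = 1"
        using assms(4) unfolding mlin_coprime_def .
      ultimately have "int p dvd 1" by (simp only: g)
      moreover have "prime (int p)" using prP pP by simp
      ultimately show ?thesis by (simp add: prime_int_iff)
    qed
  qed
  have main: "real (card {x \<in> PiE {..<\<mu>} (\<lambda>_. {0..<m}). \<forall>c'\<in>{c}. int (\<Prod>p\<in>P. p ^ r p) dvd mlin_eval \<mu> c' (\<lambda>i. int (x i))})
    \<le> real m ^ \<mu> * (real \<mu> / real m + (\<Prod>p\<in>P. GG (1 / real p) \<mu> (r p)))"
    by (rule main_lemma[OF finP prP m0 _ hyp]) simp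
  have GGi: "(\<Prod>p\<in>P. GG (1 / real p) \<mu> (r p)) = (\<Prod>p\<in>prime_factors N. inc_beta (1 / real p) (multiplicity p N) \<mu>)"
    unfolding P_def r_def
  proof (intro prod.cong refl GG_inc_beta assms(2))
    fix p assume "p \<in> prime_factors N"
    hence "p \<ge> 2" using prime_ge_2_nat by auto
    thus "0 \<le> 1 / real p" "1 / real p < 1" by auto
  qed
  have "real (card {x \<in> PiE {..<\<mu>} (\<lambda>_. {0..<m}). int N dvd mlin_eval \<mu> c (\<lambda>i. int (x i))})
    \<le> real m ^ \<mu> * (real \<mu> / real m + (\<Prod>p\<in>prime_factors N. inc_beta (1 / real p) (multiplicity p N) \<mu>))"
    using main unfolding NP GGi by simp
  moreover have "real m ^ \<mu> > 0" using m0 by simp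
  ultimately show ?thesis by (simp add: divide_le_eq mult.commute)
qed

end
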